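(* Let $G$ be a graph and $k\in\mathbb N$. For every finite star $\sigma\subseteq\vec S_k(G)$ with finite interior, the set $S_k^\sigma(G)$ is finite.
   Context: Graphs may be infinite. A separation of $G$ is a set $\{A,B\}$ with $A,B\subseteq V(G)$, $A\cup B=V(G)$ and no edge of $G$ between $A\setminus B$ and $B\setminus A$; its order is $|A\cap B|$. $S_k(G)$ is the set of separations of order $<k$ and $\vec S_k(G)$ the set of their orientations $(A,B)$, $(B,A)$. Oriented separations are ordered by $(A,B)\le(C,D)$ iff $A\subseteq C$ and $B\supseteq D$. A star is a set $\sigma$ of oriented finite-order separations, not containing $(V(G),V(G))$, with $(A,B)\le(D,C)$ for any two distinct $(A,B),(C,D)\in\sigma$; its interior is $\bigcap_{(A,B)\in\sigma}B$. $S_k^\sigma(G)$ is the set of $r\in S_k(G)$ such that for every $\vec s\in\sigma$ some orientation of $r$ is $\ge\vec s$. *)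

theory Defs
  imports Main
begin

definition graph :: "'a set \<Rightarrow> ('a \<times> 'a) set \<Rightarrow> bool" where
  "graph V E \<longleftrightarrow> E \<subseteq> V \<times> V"

definition is_sep :: "'a set \<Rightarrow> ('a \<times> 'a) set \<Rightarrow> 'a set \<Rightarrow> 'a set \<Rightarrow> bool" where
  "is_sep V E A B \<longleftrightarrow> A \<subseteq> V \<and> B \<subseteq> V \<and> A \<union> B = V \<and>
     (\<forall>x y. (x, y) \<in> E \<longrightarrow> \<not> (x \<in> A - B \<and> y \<in> B - A) \<and> \<not> (x \<in> B - A \<and> y \<in> A - B))"

definition sep_lt :: "'a set \<Rightarrow> ('a \<times> 'a) set \<Rightarrow> nat \<Rightarrow> 'a set \<Rightarrow> 'a set \<Rightarrow> bool" where
  "sep_lt V E k A B \<longleftrightarrow> is_sep V E A B \<and> finite (A \<inter> B) \<and> card (A \<inter> B) < k"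

definition S_k :: "'a set \<Rightarrow> ('a \<times> 'a) set \<Rightarrow> nat \<Rightarrow> 'a set set set" where
  "S_k V E k = {{A, B} | A B. sep_lt V E k A B}"

definition oS_k :: "'a set \<Rightarrow> ('a \<times> 'a) set \<Rightarrow> nat \<Rightarrow> ('a set \<times> 'a set) set" where
  "oS_k V E k = {(A, B) | A B. sep_lt V E k A B}"

definition sep_le :: "'a set \<times> 'a set \<Rightarrow> 'a set \<times> 'a set \<Rightarrow> bool" where
  "sep_le s t \<longleftrightarrow> fst s \<subseteq> fst t \<and> snd t \<subseteq> snd s"

definition is_star :: "'a set \<Rightarrow> ('a \<times> 'a) set \<Rightarrow> ('a set \<times> 'a set) set \<Rightarrow> bool" where
  "is_star V E \<sigma> \<longleftrightarrow>
     (\<forall>(A, B) \<in> \<sigma>. is_sep V E A B \<and> finite (A \<inter> B)) \<and>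
     (V, V) \<notin> \<sigma> \<and>
     (\<forall>(A, B) \<in> \<sigma>. \<forall>(C, D) \<in> \<sigma>. (A, B) \<noteq> (C, D) \<longrightarrow> sep_le (A, B) (D, C))"

text \<open>Interior: intersection of the B over (A,B) in sigma (taken inside V, so the empty star has interior V).\<close>
definition interior_star :: "'a set \<Rightarrow> ('a set \<times> 'a set) set \<Rightarrow> 'a set" where
  "interior_star V \<sigma> = V \<inter> \<Inter> (snd ` \<sigma>)"

definition S_k_sigma :: "'a set \<Rightarrow> ('a \<times> 'a) set \<Rightarrow> nat \<Rightarrow> ('a set \<times> 'a set) set \<Rightarrow> 'a set set set" where
  "S_k_sigma V E k \<sigma> = {r \<in> S_k V E k. \<forall>s \<in> \<sigma>. \<exists>A B. r = {A, B} \<and> sep_le s (A, B)}"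

end

theory Submission
  imports Defs
begin

lemma T_finite:
  assumes seps: "\<forall>s\<in>\<sigma>. fst s \<union> snd s = V"
    and fs: "finite \<sigma>" and fI: "finite (interior_star V \<sigma>)"
  shows "finite {(C, D). C \<subseteq> V \<and> D \<subseteq> V \<and>
      (\<forall>s\<in>\<sigma>. sep_le s (C, D) \<or> sep_le s (D, C))}" (is "finite ?T")
proof -
  let ?I = "interior_star V \<sigma>"
  define g where "g = (\<lambda>(C::'a set, D::'a set). ({s\<in>\<sigma>. sep_le s (C, D)}, C \<inter> ?I, D \<inter> ?I))"
  have sub: "g ` ?T \<subseteq> Pow \<sigma> \<times> Pow ?I \<times> Pow ?I" by (auto simp: g_def)
  have fin: "finite (g ` ?T)"
    by (rule finite_subset[OF sub]) (simp add: fs fI)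
  have key: "x \<in> C \<longleftrightarrow> x \<in> C'"
    if "(C, D) \<in> ?T" "(C', D') \<in> ?T" "g (C, D) = g (C', D')" "x \<in> V"
      and sw: "\<And>C D. (C, D) \<in> ?T \<Longrightarrow> True"
    for C D C' D' x
  proof (cases "x \<in> ?I")
    case True
    then show ?thesis using that(3) by (auto simp: g_def)
  next
    case False
    then obtain s where s: "s \<in> \<sigma>" "x \<notin> snd s" using \<open>x \<in> V\<close>
      by (auto simp: interior_star_def)
    have xa: "x \<in> fst s" using seps s \<open>x \<in> V\<close> by blast
    have eq: "sep_le s (C, D) \<longleftrightarrow> sep_le s (C', D')"
      using that(3) s(1) by (auto simp: g_def)
    show ?thesis
    proof (cases "sep_le s (C, D)")
      case True
      then show ?thesis using eq xa by (auto simp: sep_le_def)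
    next
      case False
      then have "sep_le s (D, C)" "sep_le s (D', C')" "\<not> sep_le s (C', D')"
        using that(1,2) s(1) eq by auto
      then show ?thesis using False xa s(2) by (auto simp: sep_le_def)
    qed
  qed
  have key2: "x \<in> D \<longleftrightarrow> x \<in> D'"
    if "(C, D) \<in> ?T" "(C', D') \<in> ?T" "g (C, D) = g (C', D')" "x \<in> V"
    for C D C' D' x
  proof (cases "x \<in> ?I")
    case True
    then show ?thesis using that(3) by (auto simp: g_def)
  next
    case False
    then obtain s where s: "s \<in> \<sigma>" "x \<notin> snd s" using \<open>x \<in> V\<close>
      by (auto simp: interior_star_def)
    have xa: "x \<in> fst s" using seps s \<open>x \<in> V\<close> by blast
    have eq: "sep_le s (C, D) \<longleftrightarrow> sep_le s (C', D')"
      using that(3) s(1) by (auto simp: g_def)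
    show ?thesis
    proof (cases "sep_le s (C, D)")
      case True
      then show ?thesis using eq xa s(2) by (auto simp: sep_le_def)
    next
      case False
      then have "sep_le s (D, C)" "sep_le s (D', C')" "\<not> sep_le s (C', D')"
        using that(1,2) s(1) eq by auto
      then show ?thesis using False xa s(2) by (auto simp: sep_le_def)
    qed
  qed
  have "inj_on g ?T"
  proof (rule inj_onI)
    fix p q assume p: "p \<in> ?T" and q: "q \<in> ?T" and e: "g p = g q"
    obtain C D where pc: "p = (C, D)" by (cases p)
    obtain C' D' where qc: "q = (C', D')" by (cases q)
    have "C \<subseteq> V" "D \<subseteq> V" "C' \<subseteq> V" "D' \<subseteq> V" using p q pc qc by auto
    moreover have "\<forall>x\<in>V. x \<in> C \<longleftrightarrow> x \<in> C'"
      using key[of C D C' D'] p q e pc qc by auto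
    moreover have "\<forall>x\<in>V. x \<in> D \<longleftrightarrow> x \<in> D'"
      using key2[of C D C' D'] p q e pc qc by auto
    ultimately have "C = C'" "D = D'" by blast+
    then show "p = q" using pc qc by simp
  qed
  then show ?thesis using finite_imageD fin by blast
qed

theorem proposition4p5:
  fixes V :: "'a set" and E :: "('a \<times> 'a) set" and k :: nat
    and \<sigma> :: "('a set \<times> 'a set) set"
  assumes "graph V E"
    and "is_star V E \<sigma>"
    and "\<sigma> \<subseteq> oS_k V E k"
    and "finite \<sigma>"
    and "finite (interior_star V \<sigma>)"
  shows "finite (S_k_sigma V E k \<sigma>)"
proof -
  let ?T = "{(C, D). C \<subseteq> V \<and> D \<subseteq> V \<and>
      (\<forall>s\<in>\<sigma>. sep_le s (C, D) \<or> sep_le s (D, C))}"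
  have seps: "\<forall>s\<in>\<sigma>. fst s \<union> snd s = V"
    using assms(2) by (auto simp: is_star_def is_sep_def)
  have fT: "finite ?T" using T_finite[OF seps assms(4,5)] .
  have "S_k_sigma V E k \<sigma> \<subseteq> (\<lambda>(C, D). {C, D}) ` ?T"
  proof
    fix r assume r: "r \<in> S_k_sigma V E k \<sigma>"
    then obtain C D where rc: "r = {C, D}" "sep_lt V E k C D"
      by (auto simp: S_k_sigma_def S_k_def)
    have "\<forall>s\<in>\<sigma>. sep_le s (C, D) \<or> sep_le s (D, C)"
    proof
      fix s assume "s \<in> \<sigma>"
      then obtain A B where "r = {A, B}" "sep_le s (A, B)"
        using r by (auto simp: S_k_sigma_def)
      then show "sep_le s (C, D) \<or> sep_le s (D, C)"
        using rc(1) by (auto simp: doubleton_eq_iff)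
    qed
    moreover have "C \<subseteq> V" "D \<subseteq> V" using rc(2) by (auto simp: sep_lt_def is_sep_def)
    ultimately have "(C, D) \<in> ?T" by simp
    then show "r \<in> (\<lambda>(C, D). {C, D}) ` ?T" using rc(1) by force
  qed
  then show ?thesis using fT finite_surj by blast
qed

end
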